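(* Let $(\mathcal{A}_\Lambda,\partial_\Lambda)$ be a filtered Chekanov–Eliashberg DGA over $\mathbb{Z}_2$ generated by $q_1,\dots,q_n$, let $k$ be a positive integer, and let $(S_k\mathcal{A}_\Lambda,\partial_\Lambda)$ be its grading-$k$ stabilization, with additional generators $e_k,e_{k-1}$. Let $\delta>0$. If the height filtration of $\mathcal{A}_\Lambda$ is extended to $S_k\mathcal{A}_\Lambda$ in such a way that $0<h(e_k)-h(e_{k-1})<2\delta$, then the persistent linearized contact homologies of $(\mathcal{A}_\Lambda,\partial_\Lambda)$ and $(S_k\mathcal{A}_\Lambda,\partial_\Lambda)$ (with respect to an augmentation $\epsilon$ of $\mathcal{A}_\Lambda$ and its extension to $S_k\mathcal{A}_\Lambda$ by $\epsilon(e_k)=\epsilon(e_{k-1})=0$) are $2\delta$-interleaved.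
   Context: A filtered Chekanov–Eliashberg DGA: a Chekanov–Eliashberg DGA (free noncommutative graded algebra over $\mathbb{Z}_2$ on generators, with differential) together with heights $h(q_i)>0$, extended by $h(\text{word})=$ sum of letter heights and $h(\text{sum})=$ max, such that the differential strictly decreases height. The grading-$k$ stabilization $S_k\mathcal{A}_\Lambda$ is generated by $e_k,e_{k-1},q_1,\dots,q_n$ with $|e_k|=k$, $|e_{k-1}|=k-1$, other gradings unchanged, and differential $\partial(e_k)=e_{k-1}$, $\partial(e_{k-1})=0$, agreeing with $\partial_\Lambda$ on the $q_i$. The persistent linearized contact homology is $t\mapsto H_\ast(A^t,\partial_1^\epsilon)$, where $\partial_1^\epsilon$ is the linearized differential with respect to the augmentation $\epsilon$ on the vector space spanned by the generators and $A^t$ is spanned by generators of height $\le t$, with transfer maps induced by inclusion. Persistence modules $U^\bullet,V^\bullet$ are $2\delta$-interleaved if there are maps $\varphi^t:U^t\to V^{t+\delta}$, $\psi^t:V^t\to U^{t+\delta}$ commuting with transfer maps with $\psi^{t+\delta}\varphi^t$ and $\varphi^{t+\delta}\psi^t$ equal to the transfer maps from $t$ to $t+2\delta$. *)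

theory Defs
  imports Complex_Main
begin

text \<open>An element of the free noncommutative algebra over Z2 on generators of type 'g
  is a finite sum of words; we represent it as the (finite) set of words with coefficient 1.
  The empty word is the unit 1.\<close>

type_synonym 'g alg = "'g list set"

definition sdiff :: "'a set \<Rightarrow> 'a set \<Rightarrow> 'a set" where
  "sdiff A B = (A - B) \<union> (B - A)"

text \<open>Extension of the differential (given on generators) to words via the Leibniz rule
  (no signs over Z2): d(a1...am) = sum_j a1...a(j-1) d(aj) a(j+1)...am.\<close>

definition dword :: "('g \<Rightarrow> 'g alg) \<Rightarrow> 'g list \<Rightarrow> 'g alg" where
  "dword d w = {x. odd (card {(j, v). j < length w \<and> v \<in> d (w ! j) \<and>
                                   take j w @ v @ drop (Suc j) w = x})}"

definition dalg :: "('g \<Rightarrow> 'g alg) \<Rightarrow> 'g alg \<Rightarrow> 'g alg" where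
  "dalg d A = {x. odd (card {w \<in> A. x \<in> dword d w})}"

definition word_deg :: "('g \<Rightarrow> int) \<Rightarrow> 'g list \<Rightarrow> int" where
  "word_deg gr w = sum_list (map gr w)"

definition word_height :: "('g \<Rightarrow> real) \<Rightarrow> 'g list \<Rightarrow> real" where
  "word_height h w = sum_list (map h w)"

text \<open>A filtered Chekanov--Eliashberg DGA: finite generating set G, integer grading gr,
  differential d given on generators (degree -1, d o d = 0; on generators suffices since
  d o d is a derivation over Z2), positive heights h such that d strictly decreases height
  (height of a sum = max over its words, so every word must have smaller height).\<close>

definition filtered_CE_DGA ::
  "'g set \<Rightarrow> ('g \<Rightarrow> int) \<Rightarrow> ('g \<Rightarrow> 'g alg) \<Rightarrow> ('g \<Rightarrow> real) \<Rightarrow> bool" where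
  "filtered_CE_DGA G gr d h \<longleftrightarrow>
     finite G \<and>
     (\<forall>q\<in>G. finite (d q) \<and>
        (\<forall>w\<in>d q. set w \<subseteq> G \<and> word_deg gr w = gr q - 1 \<and> word_height h w < h q)) \<and>
     (\<forall>q\<in>G. 0 < h q) \<and>
     (\<forall>q\<in>G. dalg d (d q) = {})"

text \<open>Augmentation: graded unital algebra map to Z2 (given by its values on generators,
  nonzero only in degree 0) with eps o d = 0.\<close>

definition augmentation ::
  "'g set \<Rightarrow> ('g \<Rightarrow> int) \<Rightarrow> ('g \<Rightarrow> 'g alg) \<Rightarrow> ('g \<Rightarrow> bool) \<Rightarrow> bool" where
  "augmentation G gr d eps \<longleftrightarrow>
     (\<forall>q\<in>G. eps q \<longrightarrow> gr q = 0) \<and>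
     (\<forall>q\<in>G. even (card {w \<in> d q. \<forall>a\<in>set w. eps a}))"

text \<open>Vectors in the Z2 vector space spanned by the generators are finite sets of generators.
  The linearized differential of a generator q is the linear part of phi_eps(d q), where
  phi_eps(a) = a + eps(a).\<close>

definition lin_diff :: "('g \<Rightarrow> 'g alg) \<Rightarrow> ('g \<Rightarrow> bool) \<Rightarrow> 'g \<Rightarrow> 'g set" where
  "lin_diff d eps q = {p. odd (card {(w, j). w \<in> d q \<and> j < length w \<and> w ! j = p \<and>
                                      (\<forall>i < length w. i \<noteq> j \<longrightarrow> eps (w ! i))})}"

definition lin_map :: "('g \<Rightarrow> 'g alg) \<Rightarrow> ('g \<Rightarrow> bool) \<Rightarrow> 'g set \<Rightarrow> 'g set" where
  "lin_map d eps S = {p. odd (card {q \<in> S. p \<in> lin_diff d eps q})}"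

definition chains :: "'g set \<Rightarrow> ('g \<Rightarrow> int) \<Rightarrow> ('g \<Rightarrow> real) \<Rightarrow> int \<Rightarrow> real \<Rightarrow> 'g set set" where
  "chains G gr h m t = Pow {q \<in> G. gr q = m \<and> h q \<le> t}"

definition cycles ::
  "'g set \<Rightarrow> ('g \<Rightarrow> int) \<Rightarrow> ('g \<Rightarrow> 'g alg) \<Rightarrow> ('g \<Rightarrow> real) \<Rightarrow> ('g \<Rightarrow> bool) \<Rightarrow> int \<Rightarrow> real \<Rightarrow> 'g set set" where
  "cycles G gr d h eps m t = {S \<in> chains G gr h m t. lin_map d eps S = {}}"

definition bdries ::
  "'g set \<Rightarrow> ('g \<Rightarrow> int) \<Rightarrow> ('g \<Rightarrow> 'g alg) \<Rightarrow> ('g \<Rightarrow> real) \<Rightarrow> ('g \<Rightarrow> bool) \<Rightarrow> int \<Rightarrow> real \<Rightarrow> 'g set set" where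
  "bdries G gr d h eps m t = lin_map d eps ` chains G gr h (m + 1) t"

definition coset :: "'a set set \<Rightarrow> 'a set \<Rightarrow> 'a set set" where
  "coset B z = (\<lambda>b. sdiff z b) ` B"

definition lin_homology ::
  "'g set \<Rightarrow> ('g \<Rightarrow> int) \<Rightarrow> ('g \<Rightarrow> 'g alg) \<Rightarrow> ('g \<Rightarrow> real) \<Rightarrow> ('g \<Rightarrow> bool) \<Rightarrow> int \<Rightarrow> real
    \<Rightarrow> 'g set set set" where
  "lin_homology G gr d h eps m t = coset (bdries G gr d h eps m t) ` cycles G gr d h eps m t"

definition lin_transfer ::
  "'g set \<Rightarrow> ('g \<Rightarrow> int) \<Rightarrow> ('g \<Rightarrow> 'g alg) \<Rightarrow> ('g \<Rightarrow> real) \<Rightarrow> ('g \<Rightarrow> bool) \<Rightarrow> int \<Rightarrow> real \<Rightarrow> real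
    \<Rightarrow> 'g set set \<Rightarrow> 'g set set" where
  "lin_transfer G gr d h eps m t t' c = (\<Union>z\<in>c. coset (bdries G gr d h eps m t') z)"

definition cadd :: "'a set set \<Rightarrow> 'a set set \<Rightarrow> 'a set set" where
  "cadd c1 c2 = {sdiff x y | x y. x \<in> c1 \<and> y \<in> c2}"

definition additive_on :: "'a set set set \<Rightarrow> ('a set set \<Rightarrow> 'b set set) \<Rightarrow> bool" where
  "additive_on H f \<longleftrightarrow> (\<forall>c1\<in>H. \<forall>c2\<in>H. f (cadd c1 c2) = cadd (f c1) (f c2))"

text \<open>Persistence modules (H,T) and (H',T') are 2 delta-interleaved (shift delta).
  Linear maps over Z2 are exactly additive maps.\<close>
definition interleaved ::
  "real \<Rightarrow> (real \<Rightarrow> 'a set set set) \<Rightarrow> (real \<Rightarrow> real \<Rightarrow> 'a set set \<Rightarrow> 'a set set)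
        \<Rightarrow> (real \<Rightarrow> 'b set set set) \<Rightarrow> (real \<Rightarrow> real \<Rightarrow> 'b set set \<Rightarrow> 'b set set) \<Rightarrow> bool" where
  "interleaved \<delta> H T H' T' \<longleftrightarrow>
    (\<exists>\<phi> \<psi>.
      (\<forall>t. (\<forall>c\<in>H t. \<phi> t c \<in> H' (t + \<delta>)) \<and> additive_on (H t) (\<phi> t)) \<and>
      (\<forall>t. (\<forall>c\<in>H' t. \<psi> t c \<in> H (t + \<delta>)) \<and> additive_on (H' t) (\<psi> t)) \<and>
      (\<forall>t t'. t \<le> t' \<longrightarrow> (\<forall>c\<in>H t. \<phi> t' (T t t' c) = T' (t + \<delta>) (t' + \<delta>) (\<phi> t c))) \<and>
      (\<forall>t t'. t \<le> t' \<longrightarrow> (\<forall>c\<in>H' t. \<psi> t' (T' t t' c) = T (t + \<delta>) (t' + \<delta>) (\<psi> t c))) \<and>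
      (\<forall>t. \<forall>c\<in>H t. \<psi> (t + \<delta>) (\<phi> t c) = T t (t + 2 * \<delta>) c) \<and>
      (\<forall>t. \<forall>c\<in>H' t. \<phi> (t + \<delta>) (\<psi> t c) = T' t (t + 2 * \<delta>) c))"

text \<open>Generators of S_k A: Inl q for the original q, Inr True = e_k, Inr False = e_(k-1).\<close>

definition stab_gens :: "'g set \<Rightarrow> ('g + bool) set" where
  "stab_gens G = Inl ` G \<union> {Inr True, Inr False}"

definition stab_grading :: "('g \<Rightarrow> int) \<Rightarrow> int \<Rightarrow> ('g + bool) \<Rightarrow> int" where
  "stab_grading gr k x = (case x of Inl q \<Rightarrow> gr q | Inr b \<Rightarrow> (if b then k else k - 1))"

definition stab_diff :: "('g \<Rightarrow> 'g alg) \<Rightarrow> ('g + bool) \<Rightarrow> ('g + bool) alg" where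
  "stab_diff d x = (case x of Inl q \<Rightarrow> map Inl ` d q
                            | Inr b \<Rightarrow> (if b then {[Inr False]} else {}))"

definition stab_aug :: "('g \<Rightarrow> bool) \<Rightarrow> ('g + bool) \<Rightarrow> bool" where
  "stab_aug eps x = (case x of Inl q \<Rightarrow> eps q | Inr _ \<Rightarrow> False)"

end

theory Submission
  imports Defs
begin

lemma sdiff_simps:
  "sdiff (sdiff a b) c = sdiff a (sdiff b c)"
  "sdiff a b = sdiff b a"
  "sdiff a a = {}" "sdiff a {} = a" "sdiff {} a = a"
  by (auto simp: sdiff_def)

lemma mem_sdiff: "x \<in> sdiff A B \<longleftrightarrow> (x \<in> A) \<noteq> (x \<in> B)"
  by (auto simp: sdiff_def)

definition grp :: "'a set set \<Rightarrow> bool" where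
  "grp B \<longleftrightarrow> {} \<in> B \<and> (\<forall>x\<in>B. \<forall>y\<in>B. sdiff x y \<in> B)"

lemma coset_shift:
  assumes "grp B" "b \<in> B"
  shows "coset B (sdiff z b) = coset B z"
proof
  show "coset B (sdiff z b) \<subseteq> coset B z"
  proof
    fix x assume "x \<in> coset B (sdiff z b)"
    then obtain b' where b': "b' \<in> B" "x = sdiff (sdiff z b) b'" by (auto simp: coset_def)
    have "sdiff b b' \<in> B" using assms b' by (auto simp: grp_def)
    moreover have "x = sdiff z (sdiff b b')" using b' by (auto simp: sdiff_def)
    ultimately show "x \<in> coset B z" by (auto simp: coset_def)
  qed
next
  show "coset B z \<subseteq> coset B (sdiff z b)"
  proof
    fix x assume "x \<in> coset B z"
    then obtain b' where b': "b' \<in> B" "x = sdiff z b'" by (auto simp: coset_def)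
    have "sdiff b b' \<in> B" using assms b' by (auto simp: grp_def)
    moreover have "x = sdiff (sdiff z b) (sdiff b b')" using b' by (auto simp: sdiff_def)
    ultimately show "x \<in> coset B (sdiff z b)" by (auto simp: coset_def)
  qed
qed

lemma coset_union:
  assumes g2: "grp B2" and e1: "{} \<in> B1"
    and add: "\<forall>A C. f (sdiff A C) = sdiff (f A) (f C)"
    and fB: "f ` B1 \<subseteq> B2"
  shows "(\<Union>z\<in>coset B1 z0. coset B2 (f z)) = coset B2 (f z0)"
proof -
  have "\<And>b. b \<in> B1 \<Longrightarrow> coset B2 (f (sdiff z0 b)) = coset B2 (f z0)"
    using add fB coset_shift[OF g2] by auto
  moreover have "sdiff z0 {} \<in> coset B1 z0" using e1 by (auto simp: coset_def)
  ultimately show ?thesis unfolding coset_def[of B1] using sdiff_simps(4)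
    by (smt (verit, best) SUP_cong UN_constant empty_iff image_empty image_iff)
qed

lemma cadd_coset:
  assumes "grp B"
  shows "cadd (coset B z1) (coset B z2) = coset B (sdiff z1 z2)"
proof
  show "cadd (coset B z1) (coset B z2) \<subseteq> coset B (sdiff z1 z2)"
  proof
    fix x assume "x \<in> cadd (coset B z1) (coset B z2)"
    then obtain b1 b2 where b: "b1 \<in> B" "b2 \<in> B" "x = sdiff (sdiff z1 b1) (sdiff z2 b2)"
      by (auto simp: cadd_def coset_def)
    have "sdiff b1 b2 \<in> B" using assms b by (auto simp: grp_def)
    moreover have "x = sdiff (sdiff z1 z2) (sdiff b1 b2)" using b by (auto simp: sdiff_def)
    ultimately show "x \<in> coset B (sdiff z1 z2)" by (auto simp: coset_def)
  qed
next
  show "coset B (sdiff z1 z2) \<subseteq> cadd (coset B z1) (coset B z2)"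
  proof
    fix x assume "x \<in> coset B (sdiff z1 z2)"
    then obtain b where b: "b \<in> B" "x = sdiff (sdiff z1 z2) b" by (auto simp: coset_def)
    have "sdiff z1 b \<in> coset B z1" using b by (auto simp: coset_def)
    moreover have "sdiff z2 {} \<in> coset B z2" using assms by (auto simp: coset_def grp_def)
    moreover have "x = sdiff (sdiff z1 b) (sdiff z2 {})" using b by (auto simp: sdiff_def)
    ultimately show "x \<in> cadd (coset B z1) (coset B z2)" unfolding cadd_def by blast
  qed
qed

lemma card_sdiff_parity:
  assumes "finite A" "finite B"
  shows "odd (card (sdiff A B)) = (odd (card A) \<noteq> odd (card B))"
proof -
  have s: "sdiff A B = (A \<union> B) - (A \<inter> B)" by (auto simp: sdiff_def)
  have "card (sdiff A B) = card (A \<union> B) - card (A \<inter> B)"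
    unfolding s by (rule card_Diff_subset) (use assms in auto)
  moreover have "card A + card B = card (A \<union> B) + card (A \<inter> B)"
    using card_Un_Int assms by blast
  moreover have "card (A \<inter> B) \<le> card (A \<union> B)"
    using assms by (intro card_mono) auto
  ultimately have "card (sdiff A B) + 2 * card (A \<inter> B) = card A + card B" by arith
  then show ?thesis by presburger
qed

lemma lin_map_add:
  assumes "finite A" "finite B"
  shows "lin_map d e (sdiff A B) = sdiff (lin_map d e A) (lin_map d e B)"
proof (rule set_eqI)
  fix p
  let ?P = "\<lambda>q. p \<in> lin_diff d e q"
  have eq: "{q \<in> sdiff A B. ?P q} = sdiff {q \<in> A. ?P q} {q \<in> B. ?P q}"
    unfolding sdiff_def by blast
  have fa: "finite {q \<in> A. ?P q}" "finite {q \<in> B. ?P q}"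
    using assms by simp_all
  have par: "odd (card {q \<in> sdiff A B. ?P q}) =
     (odd (card {q \<in> A. ?P q}) \<noteq> odd (card {q \<in> B. ?P q}))"
    unfolding eq by (rule card_sdiff_parity[OF fa])
  show "p \<in> lin_map d e (sdiff A B) \<longleftrightarrow> p \<in> sdiff (lin_map d e A) (lin_map d e B)"
    using par mem_sdiff[of p "lin_map d e A" "lin_map d e B"] by (simp add: lin_map_def)
qed

lemma lin_map_empty: "lin_map d e {} = {}"
  by (auto simp: lin_map_def)

lemma chains_mono: "t \<le> t' \<Longrightarrow> chains G gr h m t \<subseteq> chains G gr h m t'"
  by (auto simp: chains_def)

lemma bdries_mono: "t \<le> t' \<Longrightarrow> bdries G gr d h e m t \<subseteq> bdries G gr d h e m t'"
  unfolding bdries_def using chains_mono by blast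

lemma bdries_grp:
  assumes "finite G"
  shows "grp (bdries G gr d h e m t)"
  unfolding grp_def
proof (intro conjI ballI)
  show "{} \<in> bdries G gr d h e m t"
    unfolding bdries_def using lin_map_empty[of d e]
    by (metis Pow_bottom chains_def image_eqI)
next
  fix x y assume "x \<in> bdries G gr d h e m t" "y \<in> bdries G gr d h e m t"
  then obtain a b where ab: "a \<in> chains G gr h (m+1) t" "b \<in> chains G gr h (m+1) t"
    "x = lin_map d e a" "y = lin_map d e b" by (auto simp: bdries_def)
  have fin: "finite a" "finite b" using ab assms
    by (auto simp: chains_def intro: finite_subset)
  have "sdiff a b \<in> chains G gr h (m+1) t" using ab by (auto simp: chains_def sdiff_def)
  moreover have "sdiff x y = lin_map d e (sdiff a b)" by (simp add: lin_map_add fin ab)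
  ultimately show "sdiff x y \<in> bdries G gr d h e m t" by (auto simp: bdries_def)
qed


lemma ld_Inl:
  "lin_diff (stab_diff d) (stab_aug eps) (Inl q) = Inl ` lin_diff d eps q"
proof (rule set_eqI)
  fix p :: "'a + bool"
  let ?S = "\<lambda>p0. {(w, j). w \<in> d q \<and> j < length w \<and> w ! j = p0 \<and>
                (\<forall>i<length w. i \<noteq> j \<longrightarrow> eps (w ! i))}"
  let ?S' = "{(w, j). w \<in> stab_diff d (Inl q) \<and> j < length w \<and> w ! j = p \<and>
                (\<forall>i<length w. i \<noteq> j \<longrightarrow> stab_aug eps (w ! i))}"
  let ?f = "\<lambda>(w :: 'a list, j :: nat). (map Inl w :: ('a + bool) list, j)"
  have inj: "inj ?f" by (auto simp: inj_on_def)
  show "p \<in> lin_diff (stab_diff d) (stab_aug eps) (Inl q) \<longleftrightarrow> p \<in> Inl ` lin_diff d eps q"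
  proof (cases p)
    case (Inl p0)
    have "?S' = ?f ` ?S p0"
    proof
      show "?S' \<subseteq> ?f ` ?S p0"
      proof
        fix x assume "x \<in> ?S'"
        then obtain w j where x: "x = (map Inl w, j)" "w \<in> d q" "j < length w"
          "map Inl w ! j = p" "\<forall>i<length w. i \<noteq> j \<longrightarrow> stab_aug eps (map Inl w ! i)"
          by (auto simp: stab_diff_def)
        then have "(w, j) \<in> ?S p0" using Inl by (auto simp: stab_aug_def)
        then show "x \<in> ?f ` ?S p0" using x by force
      qed
    next
      show "?f ` ?S p0 \<subseteq> ?S'"
        using Inl by (auto simp: stab_diff_def stab_aug_def)
    qed
    then have "card ?S' = card (?S p0)"
      using card_image[OF inj_on_subset[OF inj]] by simp
    then show ?thesis using Inl by (auto simp add: lin_diff_def)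
  next
    case (Inr b)
    have "?S' = {}" using Inr by (auto simp: stab_diff_def)
    then have "card ?S' = 0" by (simp only: card.empty)
    then show ?thesis using Inr by (auto simp add: lin_diff_def)
  qed
qed

lemma ld_T:
  "lin_diff (stab_diff d) (stab_aug eps) (Inr True) = {Inr False}"
proof -
  have "\<And>p. {(w, j). w \<in> stab_diff d (Inr True) \<and> j < length w \<and> w ! j = p \<and>
                (\<forall>i<length w. i \<noteq> j \<longrightarrow> stab_aug eps (w ! i))}
        = (if p = Inr False then {([Inr False], 0)} else {})"
    by (auto simp: stab_diff_def nth_Cons split: nat.splits)
  then show ?thesis by (auto simp: lin_diff_def)
qed

lemma ld_F:
  "lin_diff (stab_diff d) (stab_aug eps) (Inr False) = {}"
  by (simp add: lin_diff_def stab_diff_def)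


lemma lm_Inl:
  "lin_map (stab_diff d) (stab_aug eps) (Inl ` S) = Inl ` lin_map d eps S"
proof (rule set_eqI)
  fix p :: "'a + bool"
  show "p \<in> lin_map (stab_diff d) (stab_aug eps) (Inl ` S) \<longleftrightarrow> p \<in> Inl ` lin_map d eps S"
  proof (cases p)
    case (Inl p0)
    have "{q' \<in> Inl ` S. p \<in> lin_diff (stab_diff d) (stab_aug eps) q'} =
          Inl ` {q \<in> S. p0 \<in> lin_diff d eps q}"
      using Inl by (auto simp: ld_Inl)
    then have "card {q' \<in> Inl ` S. p \<in> lin_diff (stab_diff d) (stab_aug eps) q'} =
          card {q \<in> S. p0 \<in> lin_diff d eps q}"
      by (simp add: card_image)
    then show ?thesis using Inl by (auto simp: lin_map_def)
  next
    case (Inr b)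
    have "{q' \<in> Inl ` S. p \<in> lin_diff (stab_diff d) (stab_aug eps) q'} = {}"
      using Inr by (auto simp: ld_Inl)
    then have "card {q' \<in> Inl ` S. p \<in> lin_diff (stab_diff d) (stab_aug eps) q'} = 0"
      by (simp only: card.empty)
    then show ?thesis using Inr by (auto simp: lin_map_def)
  qed
qed

lemma lm_pre:
  "Inl -` lin_map (stab_diff d) (stab_aug eps) S' = lin_map d eps (Inl -` S')"
proof (rule set_eqI)
  fix p
  have "{q' \<in> S'. Inl p \<in> lin_diff (stab_diff d) (stab_aug eps) q'} =
          Inl ` {q \<in> Inl -` S'. p \<in> lin_diff d eps q}"
  proof
    show "{q' \<in> S'. Inl p \<in> lin_diff (stab_diff d) (stab_aug eps) q'} \<subseteq>
          Inl ` {q \<in> Inl -` S'. p \<in> lin_diff d eps q}"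
    proof
      fix q' assume q': "q' \<in> {q' \<in> S'. Inl p \<in> lin_diff (stab_diff d) (stab_aug eps) q'}"
      show "q' \<in> Inl ` {q \<in> Inl -` S'. p \<in> lin_diff d eps q}"
      proof (cases q')
        case (Inl a) then show ?thesis using q' by (auto simp: ld_Inl)
      next
        case (Inr b) then show ?thesis using q' by (cases b) (auto simp: ld_T ld_F)
      qed
    qed
  next
    show "Inl ` {q \<in> Inl -` S'. p \<in> lin_diff d eps q} \<subseteq>
          {q' \<in> S'. Inl p \<in> lin_diff (stab_diff d) (stab_aug eps) q'}"
      by (auto simp: ld_Inl)
  qed
  then have "card {q' \<in> S'. Inl p \<in> lin_diff (stab_diff d) (stab_aug eps) q'} =
          card {q \<in> Inl -` S'. p \<in> lin_diff d eps q}"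
    by (simp add: card_image)
  then show "p \<in> Inl -` lin_map (stab_diff d) (stab_aug eps) S' \<longleftrightarrow> p \<in> lin_map d eps (Inl -` S')"
    by (simp add: lin_map_def)
qed

lemma lm_T:
  "lin_map (stab_diff d) (stab_aug eps) {Inr True} = {Inr False}"
proof -
  have "\<And>p. {q \<in> {Inr True}. p \<in> lin_diff (stab_diff d) (stab_aug eps) q} =
     (if p = Inr False then {Inr True} else {})"
    by (auto simp: ld_T)
  then show ?thesis by (auto simp: lin_map_def)
qed

lemma lm_noT:
  assumes "Inr True \<in> S'"
  shows "Inr False \<in> lin_map (stab_diff d) (stab_aug eps) S'"
proof -
  have "{q' \<in> S'. Inr False \<in> lin_diff (stab_diff d) (stab_aug eps) q'} = {Inr True}"
  proof
    show "{q' \<in> S'. Inr False \<in> lin_diff (stab_diff d) (stab_aug eps) q'} \<subseteq> {Inr True}"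
    proof
      fix q' assume q': "q' \<in> {q' \<in> S'. Inr False \<in> lin_diff (stab_diff d) (stab_aug eps) q'}"
      show "q' \<in> {Inr True}"
      proof (cases q')
        case (Inl a) then show ?thesis using q' by (auto simp: ld_Inl)
      next
        case (Inr b) then show ?thesis using q' by (cases b) (auto simp: ld_T ld_F)
      qed
    qed
  next
    show "{Inr True} \<subseteq> {q' \<in> S'. Inr False \<in> lin_diff (stab_diff d) (stab_aug eps) q'}"
      using assms by (auto simp: ld_T)
  qed
  then show ?thesis by (simp add: lin_map_def)
qed

lemma ind_bdries:
  assumes "\<forall>S\<in>chains G1 gr1 h1 (m+1) t. f S \<in> chains G2 gr2 h2 (m+1) s \<and>
             f (lin_map d1 e1 S) = lin_map d2 e2 (f S)"
  shows "f ` bdries G1 gr1 d1 h1 e1 m t \<subseteq> bdries G2 gr2 d2 h2 e2 m s"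
  using assms unfolding bdries_def by force

lemma ind_cycles:
  assumes "f {} = {}" "\<forall>S\<in>chains G1 gr1 h1 m t. f S \<in> chains G2 gr2 h2 m s \<and>
             f (lin_map d1 e1 S) = lin_map d2 e2 (f S)"
  shows "f ` cycles G1 gr1 d1 h1 e1 m t \<subseteq> cycles G2 gr2 d2 h2 e2 m s"
  using assms unfolding cycles_def by force


theorem proposition4p5:
  fixes G :: "'g set" and gr :: "'g \<Rightarrow> int" and d :: "'g \<Rightarrow> 'g alg"
    and h :: "'g \<Rightarrow> real" and eps :: "'g \<Rightarrow> bool"
    and k :: int and \<delta> :: real and h' :: "'g + bool \<Rightarrow> real"
  assumes dga: "filtered_CE_DGA G gr d h"
    and aug: "augmentation G gr d eps"
    and k_pos: "0 < k"
    and delta_pos: "0 < \<delta>"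
    and h'_ext: "\<forall>q\<in>G. h' (Inl q) = h q"
    and h'_pos: "0 < h' (Inr False)"
    and gap_pos: "0 < h' (Inr True) - h' (Inr False)"
    and gap_small: "h' (Inr True) - h' (Inr False) < 2 * \<delta>"
  shows "\<forall>m::int. interleaved \<delta>
           (lin_homology G gr d h eps m) (lin_transfer G gr d h eps m)
           (lin_homology (stab_gens G) (stab_grading gr k) (stab_diff d) h' (stab_aug eps) m)
           (lin_transfer (stab_gens G) (stab_grading gr k) (stab_diff d) h' (stab_aug eps) m)"
proof
  fix m :: int
  define G' where "G' = stab_gens G"
  define gr' where "gr' = stab_grading gr k"
  define d' where "d' = stab_diff d"
  define e' where "e' = stab_aug eps"
  define B where "B = bdries G gr d h eps m"
  define B' where "B' = bdries G' gr' d' h' e' m"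
  define Z where "Z = cycles G gr d h eps m"
  define Z' where "Z' = cycles G' gr' d' h' e' m"
  define \<iota> where "\<iota> = (\<lambda>S::'g set. Inl ` S :: ('g + bool) set)"
  define \<pi> where "\<pi> = (\<lambda>S::('g + bool) set. Inl -` S :: 'g set)"
  have finG: "finite G" using dga by (simp add: filtered_CE_DGA_def)
  have finG': "finite G'" using finG by (simp add: G'_def stab_gens_def)
  have gB: "\<And>t. grp (B t)" unfolding B_def using bdries_grp[OF finG] by blast
  have gB': "\<And>t. grp (B' t)" unfolding B'_def using bdries_grp[OF finG'] by blast
  have eB: "\<And>t. {} \<in> B t" using gB by (simp add: grp_def)
  have eB': "\<And>t. {} \<in> B' t" using gB' by (simp add: grp_def)
  have monoB: "\<And>t t'. t \<le> t' \<Longrightarrow> B t \<subseteq> B t'" unfolding B_def by (rule bdries_mono)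
  have monoB': "\<And>t t'. t \<le> t' \<Longrightarrow> B' t \<subseteq> B' t'" unfolding B'_def by (rule bdries_mono)
  have add\<iota>: "\<forall>A C. \<iota> (sdiff A C) = sdiff (\<iota> A) (\<iota> C)" by (auto simp: \<iota>_def sdiff_def)
  have add\<pi>: "\<forall>A C. \<pi> (sdiff A C) = sdiff (\<pi> A) (\<pi> C)" by (auto simp: \<pi>_def sdiff_def)
  have addid: "\<forall>A C. id (sdiff A C) = sdiff (id A) (id C)" by simp
  have ch\<iota>: "\<And>n t s S. t \<le> s \<Longrightarrow> S \<in> chains G gr h n t \<Longrightarrow> \<iota> S \<in> chains G' gr' h' n s"
    using h'_ext by (auto simp: \<iota>_def chains_def G'_def stab_gens_def gr'_def stab_grading_def)
  have ch\<pi>: "\<And>n t s S. t \<le> s \<Longrightarrow> S \<in> chains G' gr' h' n t \<Longrightarrow> \<pi> S \<in> chains G gr h n s"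
    using h'_ext by (fastforce simp: \<pi>_def chains_def G'_def stab_gens_def gr'_def stab_grading_def)
  have cm\<iota>: "\<And>S. \<iota> (lin_map d eps S) = lin_map d' e' (\<iota> S)"
    by (simp add: \<iota>_def d'_def e'_def lm_Inl)
  have cm\<pi>: "\<And>S. \<pi> (lin_map d' e' S) = lin_map d eps (\<pi> S)"
    by (simp add: \<pi>_def d'_def e'_def lm_pre)
  have \<iota>B: "\<And>t s. t \<le> s \<Longrightarrow> \<iota> ` B t \<subseteq> B' s"
    unfolding B_def B'_def by (rule ind_bdries) (use ch\<iota> cm\<iota> in blast)
  have \<pi>B: "\<And>t s. t \<le> s \<Longrightarrow> \<pi> ` B' t \<subseteq> B s"
    unfolding B_def B'_def by (rule ind_bdries) (use ch\<pi> cm\<pi> in blast)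
  have \<iota>Z: "\<And>t s. t \<le> s \<Longrightarrow> \<iota> ` Z t \<subseteq> Z' s"
    unfolding Z_def Z'_def by (rule ind_cycles) (use ch\<iota> cm\<iota> in \<open>auto simp: \<iota>_def\<close>)
  have \<pi>Z: "\<And>t s. t \<le> s \<Longrightarrow> \<pi> ` Z' t \<subseteq> Z s"
    unfolding Z_def Z'_def by (rule ind_cycles) (use ch\<pi> cm\<pi> in \<open>auto simp: \<pi>_def\<close>)
  have Tf: "\<And>t t' z. t \<le> t' \<Longrightarrow> (\<Union>x\<in>coset (B t) z. coset (B t') x) = coset (B t') z"
  proof -
    fix t t' :: real and z assume "t \<le> t'"
    then have "id ` B t \<subseteq> B t'" using monoB by simp
    from coset_union[OF gB eB addid this] show "(\<Union>x\<in>coset (B t) z. coset (B t') x) = coset (B t') z"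
      by simp
  qed
  have Tf': "\<And>t t' z. t \<le> t' \<Longrightarrow> (\<Union>x\<in>coset (B' t) z. coset (B' t') x) = coset (B' t') z"
  proof -
    fix t t' :: real and z assume "t \<le> t'"
    then have "id ` B' t \<subseteq> B' t'" using monoB' by simp
    from coset_union[OF gB' eB' addid this] show "(\<Union>x\<in>coset (B' t) z. coset (B' t') x) = coset (B' t') z"
      by simp
  qed
  have \<phi>f: "\<And>t s z. t \<le> s \<Longrightarrow> (\<Union>x\<in>coset (B t) z. coset (B' s) (\<iota> x)) = coset (B' s) (\<iota> z)"
  proof -
    fix t s :: real and z assume "t \<le> s"
    from coset_union[OF gB' eB add\<iota> \<iota>B[OF this]]
    show "(\<Union>x\<in>coset (B t) z. coset (B' s) (\<iota> x)) = coset (B' s) (\<iota> z)" .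
  qed
  have \<psi>f: "\<And>t s z. t \<le> s \<Longrightarrow> (\<Union>x\<in>coset (B' t) z. coset (B s) (\<pi> x)) = coset (B s) (\<pi> z)"
  proof -
    fix t s :: real and z assume "t \<le> s"
    from coset_union[OF gB eB' add\<pi> \<pi>B[OF this]]
    show "(\<Union>x\<in>coset (B' t) z. coset (B s) (\<pi> x)) = coset (B s) (\<pi> z)" .
  qed
  define \<phi> where "\<phi> = (\<lambda>t c. \<Union>x\<in>c. coset (B' (t + \<delta>)) (\<iota> x))"
  define \<psi> where "\<psi> = (\<lambda>t c. \<Union>x\<in>c. coset (B (t + \<delta>)) (\<pi> x))"
  have \<phi>c: "\<And>t z. \<phi> t (coset (B t) z) = coset (B' (t + \<delta>)) (\<iota> z)"
    unfolding \<phi>_def using \<phi>f delta_pos by simp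
  have \<psi>c: "\<And>t z. \<psi> t (coset (B' t) z) = coset (B (t + \<delta>)) (\<pi> z)"
    unfolding \<psi>_def using \<psi>f delta_pos by simp
  have Tc: "\<And>t t' z. t \<le> t' \<Longrightarrow> lin_transfer G gr d h eps m t t' (coset (B t) z) = coset (B t') z"
    unfolding lin_transfer_def B_def[symmetric] using Tf by simp
  have Tc': "\<And>t t' z. t \<le> t' \<Longrightarrow> lin_transfer G' gr' d' h' e' m t t' (coset (B' t) z) = coset (B' t') z"
    unfolding lin_transfer_def B'_def[symmetric] using Tf' by simp
  have H: "\<And>t. lin_homology G gr d h eps m t = coset (B t) ` Z t"
    by (simp add: lin_homology_def B_def Z_def)
  have H': "\<And>t. lin_homology G' gr' d' h' e' m t = coset (B' t) ` Z' t"
    by (simp add: lin_homology_def B'_def Z'_def)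
  \<comment> \<open>the e-part of a stabilized cycle is a boundary\<close>
  have epart: "\<And>t z. z \<in> Z' t \<Longrightarrow> coset (B' (t + 2 * \<delta>)) (\<iota> (\<pi> z)) = coset (B' (t + 2 * \<delta>)) z"
  proof -
    fix t z assume zZ: "z \<in> Z' t"
    define e where "e = z - range Inl"
    have zc: "z \<in> chains G' gr' h' m t" and zl: "lin_map d' e' z = {}"
      using zZ by (auto simp: Z'_def cycles_def)
    have noT: "Inr True \<notin> z"
      using lm_noT[of z d eps] zl by (auto simp: d'_def e'_def)
    have eq: "\<iota> (\<pi> z) = sdiff z e" by (auto simp: \<iota>_def \<pi>_def e_def sdiff_def)
    have eB: "e \<in> B' (t + 2 * \<delta>)"
    proof (cases "Inr False \<in> z")
      case False
      then have "e = {}" using noT by (auto simp: e_def) (metis (full_types) Inr_inject rangeI sumE)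
      then show ?thesis using eB' by simp
    next
      case True
      then have e1: "e = {Inr False}" using noT by (auto simp: e_def) (metis (full_types) Inr_inject rangeI sumE)
      have m1: "m = k - 1" and ht: "h' (Inr False) \<le> t"
        using True zc by (auto simp: chains_def gr'_def stab_grading_def)
      have "{Inr True} \<in> chains G' gr' h' (m + 1) (t + 2 * \<delta>)"
        using m1 ht gap_small by (auto simp: chains_def G'_def stab_gens_def gr'_def stab_grading_def)
      moreover have "lin_map d' e' {Inr True} = {Inr False}" by (simp add: d'_def e'_def lm_T)
      ultimately show ?thesis unfolding e1 B'_def bdries_def by (metis image_eqI)
    qed
    show "coset (B' (t + 2 * \<delta>)) (\<iota> (\<pi> z)) = coset (B' (t + 2 * \<delta>)) z"
      unfolding eq by (rule coset_shift[OF gB' eB])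
  qed
  show "interleaved \<delta>
           (lin_homology G gr d h eps m) (lin_transfer G gr d h eps m)
           (lin_homology (stab_gens G) (stab_grading gr k) (stab_diff d) h' (stab_aug eps) m)
           (lin_transfer (stab_gens G) (stab_grading gr k) (stab_diff d) h' (stab_aug eps) m)"
    unfolding G'_def[symmetric] gr'_def[symmetric] d'_def[symmetric] e'_def[symmetric]
    unfolding interleaved_def
  proof (intro exI conjI allI impI ballI)
    fix t c assume "c \<in> lin_homology G gr d h eps m t"
    then obtain z where z: "z \<in> Z t" "c = coset (B t) z" using H by auto
    show "\<phi> t c \<in> lin_homology G' gr' d' h' e' m (t + \<delta>)"
      unfolding H' z \<phi>c using \<iota>Z[of t "t + \<delta>"] z delta_pos by auto
  next
    fix t show "additive_on (lin_homology G gr d h eps m t) (\<phi> t)"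
      unfolding additive_on_def H
      by (auto simp: cadd_coset[OF gB] cadd_coset[OF gB'] \<phi>c add\<iota>)
  next
    fix t c assume "c \<in> lin_homology G' gr' d' h' e' m t"
    then obtain z where z: "z \<in> Z' t" "c = coset (B' t) z" using H' by auto
    show "\<psi> t c \<in> lin_homology G gr d h eps m (t + \<delta>)"
      unfolding H z \<psi>c using \<pi>Z[of t "t + \<delta>"] z delta_pos by auto
  next
    fix t show "additive_on (lin_homology G' gr' d' h' e' m t) (\<psi> t)"
      unfolding additive_on_def H'
      by (auto simp: cadd_coset[OF gB] cadd_coset[OF gB'] \<psi>c add\<pi>)
  next
    fix t t' c assume tt: "t \<le> t'" and "c \<in> lin_homology G gr d h eps m t"
    then obtain z where z: "z \<in> Z t" "c = coset (B t) z" using H by auto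
    show "\<phi> t' (lin_transfer G gr d h eps m t t' c) =
          lin_transfer G' gr' d' h' e' m (t + \<delta>) (t' + \<delta>) (\<phi> t c)"
      unfolding z using tt by (simp add: Tc Tc' \<phi>c)
  next
    fix t t' c assume tt: "t \<le> t'" and "c \<in> lin_homology G' gr' d' h' e' m t"
    then obtain z where z: "z \<in> Z' t" "c = coset (B' t) z" using H' by auto
    show "\<psi> t' (lin_transfer G' gr' d' h' e' m t t' c) =
          lin_transfer G gr d h eps m (t + \<delta>) (t' + \<delta>) (\<psi> t c)"
      unfolding z using tt by (simp add: Tc Tc' \<psi>c)
  next
    fix t c assume "c \<in> lin_homology G gr d h eps m t"
    then obtain z where z: "z \<in> Z t" "c = coset (B t) z" using H by auto
    have pi: "\<pi> (\<iota> z) = z" by (auto simp: \<pi>_def \<iota>_def)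
    have tdd: "t + \<delta> + \<delta> = t + 2 * \<delta>" by simp
    have "\<psi> (t + \<delta>) (\<phi> t c) = coset (B (t + \<delta> + \<delta>)) (\<pi> (\<iota> z))"
      unfolding z \<phi>c \<psi>c by (rule refl)
    also have "\<dots> = coset (B (t + 2 * \<delta>)) z" by (simp only: pi tdd)
    also have "\<dots> = lin_transfer G gr d h eps m t (t + 2 * \<delta>) c"
      unfolding z by (rule Tc[symmetric]) (use delta_pos in simp)
    finally show "\<psi> (t + \<delta>) (\<phi> t c) = lin_transfer G gr d h eps m t (t + 2 * \<delta>) c" .
  next
    fix t c assume "c \<in> lin_homology G' gr' d' h' e' m t"
    then obtain z where z: "z \<in> Z' t" "c = coset (B' t) z" using H' by auto
    have tdd: "t + \<delta> + \<delta> = t + 2 * \<delta>" by simp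
    have "\<phi> (t + \<delta>) (\<psi> t c) = coset (B' (t + \<delta> + \<delta>)) (\<iota> (\<pi> z))"
      unfolding z \<phi>c \<psi>c by (rule refl)
    also have "\<dots> = coset (B' (t + 2 * \<delta>)) z" by (simp only: epart[OF z(1)] tdd)
    also have "\<dots> = lin_transfer G' gr' d' h' e' m t (t + 2 * \<delta>) c"
      unfolding z by (rule Tc'[symmetric]) (use delta_pos in simp)
    finally show "\<phi> (t + \<delta>) (\<psi> t c) = lin_transfer G' gr' d' h' e' m t (t + 2 * \<delta>) c" .
  qed
qed

end
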